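(* Let $\Gamma$ be a finite multiset of formulas and $F$ a formula. Then $F\supset\bot,\Gamma\longrightarrow F$ has a $\mathbf{C}$-proof if and only if $\Gamma\longrightarrow F$ has a $\mathbf{C}$-proof.
   Context: Formulas are first-order formulas built from atomic formulas and the logical constants $\top$, $\bot$ (not counted as atomic) using $\land,\lor,\supset,\forall,\exists$; $B[t/x]$ is capture-avoiding substitution of term $t$ for free $x$ in $B$. A sequent $\Gamma\longrightarrow\Delta$ is a pair of finite multisets of formulas; $B,\Gamma$ denotes $\Gamma$ with an extra occurrence of $B$. A sequent is an axiom if $\top\in\Delta$ or some formula that is $\bot$ or atomic occurs in both $\Gamma$ and $\Delta$. Writing premises $\Rightarrow$ conclusion, the rules are all instances of: contr-L: $B,B,\Gamma\longrightarrow\Delta\Rightarrow B,\Gamma\longrightarrow\Delta$; contr-R: $\Gamma\longrightarrow\Delta,B,B\Rightarrow\Gamma\longrightarrow\Delta,B$; $\bot$-R: $\Gamma\longrightarrow\Delta,\bot\Rightarrow\Gamma\longrightarrow\Delta,D$; $\land$-L: $B,\Gamma\longrightarrow\Delta\Rightarrow B\land D,\Gamma\longrightarrow\Delta$ and $D,\Gamma\longrightarrow\Delta\Rightarrow B\land D,\Gamma\longrightarrow\Delta$; $\lor$-L: $B,\Gamma\longrightarrow\Delta$ and $D,\Gamma\longrightarrow\Delta\Rightarrow B\lor D,\Gamma\longrightarrow\Delta$; $\land$-R: $\Gamma\longrightarrow\Delta,B$ and $\Gamma\longrightarrow\Delta,D\Rightarrow\Gamma\longrightarrow\Delta,B\land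 D$; $\lor$-R: $\Gamma\longrightarrow\Delta,B\Rightarrow\Gamma\longrightarrow\Delta,B\lor D$ and $\Gamma\longrightarrow\Delta,D\Rightarrow\Gamma\longrightarrow\Delta,B\lor D$; $\supset$-L: $\Gamma\longrightarrow\Delta,B$ and $D,\Gamma\longrightarrow\Theta\Rightarrow B\supset D,\Gamma\longrightarrow\Delta,\Theta$; $\supset$-R: $B,\Gamma\longrightarrow\Delta,D\Rightarrow\Gamma\longrightarrow\Delta,B\supset D$; $\forall$-L: $B[t/x],\Gamma\longrightarrow\Delta\Rightarrow\forall x B,\Gamma\longrightarrow\Delta$; $\exists$-R: $\Gamma\longrightarrow\Delta,B[t/x]\Rightarrow\Gamma\longrightarrow\Delta,\exists x B$ ($t$ any term); $\exists$-L: $B[c/x],\Gamma\longrightarrow\Delta\Rightarrow\exists x B,\Gamma\longrightarrow\Delta$; $\forall$-R: $\Gamma\longrightarrow\Delta,B[c/x]\Rightarrow\Gamma\longrightarrow\Delta,\forall x B$, where the constant $c$ does not occur in the conclusion. A $\mathbf{C}$-proof (classical) is a finite tree of sequents with axioms at the leaves, each internal node being the conclusion of a rule instance whose premises are its children. *)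

theory Defs
  imports Main "HOL-Library.Multiset"
begin

text \<open>First-order terms and formulas; bound variables are de Bruijn indices
  (loose indices are free variables). Constants are 0-ary function symbols.\<close>

datatype 'f tm = Var nat | Fn 'f "'f tm list"

datatype ('f, 'p) fm =
    Atom 'p "'f tm list"
  | Top
  | Bot
  | Conj "('f, 'p) fm" "('f, 'p) fm"
  | Disj "('f, 'p) fm" "('f, 'p) fm"
  | Imp "('f, 'p) fm" "('f, 'p) fm"
  | Forall "('f, 'p) fm"
  | Exists "('f, 'p) fm"

fun lift_tm :: "nat \<Rightarrow> 'f tm \<Rightarrow> 'f tm" where
  "lift_tm k (Var i) = (if i < k then Var i else Var (Suc i))"
| "lift_tm k (Fn f ts) = Fn f (map (lift_tm k) ts)"

fun subst_tm :: "'f tm \<Rightarrow> nat \<Rightarrow> 'f tm \<Rightarrow> 'f tm" where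
  "subst_tm (Var i) k s = (if i < k then Var i else if i = k then s else Var (i - 1))"
| "subst_tm (Fn f ts) k s = Fn f (map (\<lambda>t. subst_tm t k s) ts)"

fun subst_fm :: "('f, 'p) fm \<Rightarrow> nat \<Rightarrow> 'f tm \<Rightarrow> ('f, 'p) fm" where
  "subst_fm (Atom p ts) k s = Atom p (map (\<lambda>t. subst_tm t k s) ts)"
| "subst_fm Top k s = Top"
| "subst_fm Bot k s = Bot"
| "subst_fm (Conj A B) k s = Conj (subst_fm A k s) (subst_fm B k s)"
| "subst_fm (Disj A B) k s = Disj (subst_fm A k s) (subst_fm B k s)"
| "subst_fm (Imp A B) k s = Imp (subst_fm A k s) (subst_fm B k s)"
| "subst_fm (Forall A) k s = Forall (subst_fm A (Suc k) (lift_tm 0 s))"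
| "subst_fm (Exists A) k s = Exists (subst_fm A (Suc k) (lift_tm 0 s))"

definition inst :: "('f, 'p) fm \<Rightarrow> 'f tm \<Rightarrow> ('f, 'p) fm" where
  "inst B t = subst_fm B 0 t"

fun consts_tm :: "'f tm \<Rightarrow> 'f set" where
  "consts_tm (Var i) = {}"
| "consts_tm (Fn f ts) = (if ts = [] then {f} else \<Union> (set (map consts_tm ts)))"

fun consts_fm :: "('f, 'p) fm \<Rightarrow> 'f set" where
  "consts_fm (Atom p ts) = \<Union> (set (map consts_tm ts))"
| "consts_fm Top = {}"
| "consts_fm Bot = {}"
| "consts_fm (Conj A B) = consts_fm A \<union> consts_fm B"
| "consts_fm (Disj A B) = consts_fm A \<union> consts_fm B"
| "consts_fm (Imp A B) = consts_fm A \<union> consts_fm B"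
| "consts_fm (Forall A) = consts_fm A"
| "consts_fm (Exists A) = consts_fm A"

definition consts_seq :: "('f, 'p) fm multiset \<Rightarrow> ('f, 'p) fm multiset \<Rightarrow> 'f set" where
  "consts_seq \<Gamma> \<Delta> = (\<Union>B \<in> set_mset (\<Gamma> + \<Delta>). consts_fm B)"

fun is_atom :: "('f, 'p) fm \<Rightarrow> bool" where
  "is_atom (Atom p ts) = True"
| "is_atom _ = False"

definition is_axiom :: "('f, 'p) fm multiset \<Rightarrow> ('f, 'p) fm multiset \<Rightarrow> bool" where
  "is_axiom \<Gamma> \<Delta> \<longleftrightarrow> Top \<in># \<Delta> \<or> (\<exists>B. (B = Bot \<or> is_atom B) \<and> B \<in># \<Gamma> \<and> B \<in># \<Delta>)"

text \<open>C-provability: existence of a finite proof tree, as an inductive predicate.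
  add_mset B \<Gamma> is "B, \<Gamma>"; \<Delta> + \<Theta> is "\<Delta>, \<Theta>".\<close>
inductive Cprov :: "('f, 'p) fm multiset \<Rightarrow> ('f, 'p) fm multiset \<Rightarrow> bool" where
  ax: "is_axiom \<Gamma> \<Delta> \<Longrightarrow> Cprov \<Gamma> \<Delta>"
| contrL: "Cprov (add_mset B (add_mset B \<Gamma>)) \<Delta> \<Longrightarrow> Cprov (add_mset B \<Gamma>) \<Delta>"
| contrR: "Cprov \<Gamma> (add_mset B (add_mset B \<Delta>)) \<Longrightarrow> Cprov \<Gamma> (add_mset B \<Delta>)"
| botR: "Cprov \<Gamma> (add_mset Bot \<Delta>) \<Longrightarrow> Cprov \<Gamma> (add_mset D \<Delta>)"
| conjL1: "Cprov (add_mset B \<Gamma>) \<Delta> \<Longrightarrow> Cprov (add_mset (Conj B D) \<Gamma>) \<Delta>"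
| conjL2: "Cprov (add_mset D \<Gamma>) \<Delta> \<Longrightarrow> Cprov (add_mset (Conj B D) \<Gamma>) \<Delta>"
| disjL: "Cprov (add_mset B \<Gamma>) \<Delta> \<Longrightarrow> Cprov (add_mset D \<Gamma>) \<Delta> \<Longrightarrow>
    Cprov (add_mset (Disj B D) \<Gamma>) \<Delta>"
| conjR: "Cprov \<Gamma> (add_mset B \<Delta>) \<Longrightarrow> Cprov \<Gamma> (add_mset D \<Delta>) \<Longrightarrow>
    Cprov \<Gamma> (add_mset (Conj B D) \<Delta>)"
| disjR1: "Cprov \<Gamma> (add_mset B \<Delta>) \<Longrightarrow> Cprov \<Gamma> (add_mset (Disj B D) \<Delta>)"
| disjR2: "Cprov \<Gamma> (add_mset D \<Delta>) \<Longrightarrow> Cprov \<Gamma> (add_mset (Disj B D) \<Delta>)"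
| impL: "Cprov \<Gamma> (add_mset B \<Delta>) \<Longrightarrow> Cprov (add_mset D \<Gamma>) \<Theta> \<Longrightarrow>
    Cprov (add_mset (Imp B D) \<Gamma>) (\<Delta> + \<Theta>)"
| impR: "Cprov (add_mset B \<Gamma>) (add_mset D \<Delta>) \<Longrightarrow> Cprov \<Gamma> (add_mset (Imp B D) \<Delta>)"
| allL: "Cprov (add_mset (inst B t) \<Gamma>) \<Delta> \<Longrightarrow> Cprov (add_mset (Forall B) \<Gamma>) \<Delta>"
| exR: "Cprov \<Gamma> (add_mset (inst B t) \<Delta>) \<Longrightarrow> Cprov \<Gamma> (add_mset (Exists B) \<Delta>)"
| exL: "c \<notin> consts_seq (add_mset (Exists B) \<Gamma>) \<Delta> \<Longrightarrow>
    Cprov (add_mset (inst B (Fn c [])) \<Gamma>) \<Delta> \<Longrightarrow> Cprov (add_mset (Exists B) \<Gamma>) \<Delta>"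
| allR: "c \<notin> consts_seq \<Gamma> (add_mset (Forall B) \<Delta>) \<Longrightarrow>
    Cprov \<Gamma> (add_mset (inst B (Fn c [])) \<Delta>) \<Longrightarrow> Cprov \<Gamma> (add_mset (Forall B) \<Delta>)"

end

theory Submission
  imports Defs
begin

fun rn_tm :: "('f \<Rightarrow> 'f) \<Rightarrow> 'f tm \<Rightarrow> 'f tm" where
  "rn_tm \<sigma> (Var i) = Var i"
| "rn_tm \<sigma> (Fn f ts) = (if ts = [] then Fn (\<sigma> f) [] else Fn f (map (rn_tm \<sigma>) ts))"

fun rn_fm :: "('f \<Rightarrow> 'f) \<Rightarrow> ('f, 'p) fm \<Rightarrow> ('f, 'p) fm" where
  "rn_fm \<sigma> (Atom p ts) = Atom p (map (rn_tm \<sigma>) ts)"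
| "rn_fm \<sigma> Top = Top"
| "rn_fm \<sigma> Bot = Bot"
| "rn_fm \<sigma> (Conj A B) = Conj (rn_fm \<sigma> A) (rn_fm \<sigma> B)"
| "rn_fm \<sigma> (Disj A B) = Disj (rn_fm \<sigma> A) (rn_fm \<sigma> B)"
| "rn_fm \<sigma> (Imp A B) = Imp (rn_fm \<sigma> A) (rn_fm \<sigma> B)"
| "rn_fm \<sigma> (Forall A) = Forall (rn_fm \<sigma> A)"
| "rn_fm \<sigma> (Exists A) = Exists (rn_fm \<sigma> A)"

lemma rn_lift: "rn_tm \<sigma> (lift_tm k t) = lift_tm k (rn_tm \<sigma> t)"
  by (induction t) auto

lemma rn_subst_tm: "rn_tm \<sigma> (subst_tm t k s) = subst_tm (rn_tm \<sigma> t) k (rn_tm \<sigma> s)"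
  by (induction t) auto

lemma rn_subst_fm: "rn_fm \<sigma> (subst_fm A k s) = subst_fm (rn_fm \<sigma> A) k (rn_tm \<sigma> s)"
  by (induction A arbitrary: k s) (auto simp: rn_subst_tm rn_lift)

lemma rn_inst: "rn_fm \<sigma> (inst B (Fn c [])) = inst (rn_fm \<sigma> B) (Fn (\<sigma> c) [])"
  by (simp add: inst_def rn_subst_fm)

lemma consts_rn_tm: "consts_tm (rn_tm \<sigma> t) = \<sigma> ` consts_tm t"
  by (induction t) auto

lemma consts_rn_fm: "consts_fm (rn_fm \<sigma> A) = \<sigma> ` consts_fm A"
  by (induction A) (auto simp: consts_rn_tm)

lemma rn_tm_agree: "(\<forall>e\<in>consts_tm t. \<sigma> e = \<sigma>' e) \<Longrightarrow> rn_tm \<sigma> t = rn_tm \<sigma>' t"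
  by (induction t) auto

lemma rn_fm_agree: "(\<forall>e\<in>consts_fm A. \<sigma> e = \<sigma>' e) \<Longrightarrow> rn_fm \<sigma> A = rn_fm \<sigma>' A"
  by (induction A) (auto intro: rn_tm_agree)

lemma finite_consts_tm: "finite (consts_tm t)"
  by (induction t) auto

lemma finite_consts_fm: "finite (consts_fm A)"
  by (induction A) (auto simp: finite_consts_tm)

lemma finite_consts_seq: "finite (consts_seq G D)"
  by (simp add: consts_seq_def finite_consts_fm)

lemma is_atom_rn: "is_atom (rn_fm \<sigma> A) = is_atom A"
  by (cases A) auto

lemma rn_Top: "rn_fm \<sigma> A = Top \<longleftrightarrow> A = Top" by (cases A) auto
lemma rn_Bot: "rn_fm \<sigma> A = Bot \<longleftrightarrow> A = Bot" by (cases A) auto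

lemma axiom_rn: "is_axiom G D \<Longrightarrow> is_axiom (image_mset (rn_fm \<sigma>) G + X) (image_mset (rn_fm \<sigma>) D + Y)"
  unfolding is_axiom_def
  apply (erule disjE)
   apply (metis rn_fm.simps(2) image_eqI set_image_mset union_iff)
  apply (elim exE conjE)
  apply (rule disjI2)
  apply (rule_tac x="rn_fm \<sigma> B" in exI)
  apply (intro conjI)
    apply (auto simp: is_atom_rn)[1]
   apply (metis image_eqI set_image_mset union_iff)
  apply (metis image_eqI set_image_mset union_iff)
  done

lemma fresh_exists:
  assumes "infinite (UNIV :: 'f set)" shows "\<exists>d::'f. d \<notin> consts_seq G D"
  using assms finite_consts_seq ex_new_if_finite by blast

lemma rn_image_agree:
  assumes "c \<notin> consts_seq G D"
  shows "image_mset (rn_fm (\<sigma>(c := d))) G = image_mset (rn_fm \<sigma>) G"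
    "image_mset (rn_fm (\<sigma>(c := d))) D = image_mset (rn_fm \<sigma>) D"
  using assms unfolding consts_seq_def
  by (auto intro!: image_mset_cong rn_fm_agree)

lemma weak_rn:
  assumes inf: "infinite (UNIV :: 'f set)"
  shows "Cprov (G :: ('f,'p) fm multiset) D \<Longrightarrow> Cprov (image_mset (rn_fm \<sigma>) G + X) (image_mset (rn_fm \<sigma>) D + Y)"
proof (induction arbitrary: \<sigma> X Y rule: Cprov.induct)
  case (ax \<Gamma> \<Delta>)
  then show ?case by (intro Cprov.ax axiom_rn)
next
  case (contrL B \<Gamma> \<Delta>)
  then show ?case using Cprov.contrL by fastforce
next
  case (contrR \<Gamma> B \<Delta>)
  then show ?case using Cprov.contrR by fastforce
next
  case (botR \<Gamma> \<Delta> D)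
  then show ?case using Cprov.botR by fastforce
next
  case (conjL1 B \<Gamma> \<Delta> D)
  then show ?case using Cprov.conjL1 by fastforce
next
  case (conjL2 D \<Gamma> \<Delta> B)
  then show ?case using Cprov.conjL2 by fastforce
next
  case (disjL B \<Gamma> \<Delta> D)
  then show ?case using Cprov.disjL by fastforce
next
  case (conjR \<Gamma> B \<Delta> D)
  then show ?case using Cprov.conjR by fastforce
next
  case (disjR1 \<Gamma> B \<Delta> D)
  then show ?case using Cprov.disjR1 by fastforce
next
  case (disjR2 \<Gamma> D \<Delta> B)
  then show ?case using Cprov.disjR2 by fastforce
next
  case (impL \<Gamma> B \<Delta> D \<Theta>)
  have 1: "Cprov (image_mset (rn_fm \<sigma>) \<Gamma> + X) (add_mset (rn_fm \<sigma> B) (image_mset (rn_fm \<sigma>) \<Delta> + Y))"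
    using impL.IH(1)[of \<sigma> X Y] by simp
  have 2: "Cprov (add_mset (rn_fm \<sigma> D) (image_mset (rn_fm \<sigma>) \<Gamma> + X)) (image_mset (rn_fm \<sigma>) \<Theta>)"
    using impL.IH(2)[of \<sigma> X "{#}"] by simp
  show ?case using Cprov.impL[OF 1 2] by (simp add: ac_simps)
next
  case (impR B \<Gamma> D \<Delta>)
  then show ?case using Cprov.impR by fastforce
next
  case (allL B t \<Gamma> \<Delta>)
  then show ?case using Cprov.allL by (fastforce simp: inst_def rn_subst_fm)
next
  case (exR \<Gamma> B t \<Delta>)
  then show ?case using Cprov.exR by (fastforce simp: inst_def rn_subst_fm)
next
  case (exL c B \<Gamma> \<Delta>)
  let ?G = "add_mset (Exists (rn_fm \<sigma> B)) (image_mset (rn_fm \<sigma>) \<Gamma> + X)"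
  let ?D = "image_mset (rn_fm \<sigma>) \<Delta> + Y"
  obtain d where d: "d \<notin> consts_seq ?G ?D" using fresh_exists[OF inf] by blast
  have cB: "c \<notin> consts_fm B" using exL.hyps(1) by (simp add: consts_seq_def)
  have eB: "rn_fm (\<sigma>(c := d)) B = rn_fm \<sigma> B" using cB by (auto intro!: rn_fm_agree)
  have cGD: "c \<notin> consts_seq \<Gamma> \<Delta>" using exL.hyps(1) by (simp add: consts_seq_def)
  have "Cprov (image_mset (rn_fm (\<sigma>(c := d))) (add_mset (inst B (Fn c [])) \<Gamma>) + X)
     (image_mset (rn_fm (\<sigma>(c := d))) \<Delta> + Y)" by (rule exL.IH)
  then have "Cprov (add_mset (inst (rn_fm \<sigma> B) (Fn d [])) (image_mset (rn_fm \<sigma>) \<Gamma> + X)) ?D"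
    by (simp add: rn_inst eB rn_image_agree[OF cGD])
  then show ?case using Cprov.exL[OF d] by simp
next
  case (allR c \<Gamma> B \<Delta>)
  let ?G = "image_mset (rn_fm \<sigma>) \<Gamma> + X"
  let ?D = "add_mset (Forall (rn_fm \<sigma> B)) (image_mset (rn_fm \<sigma>) \<Delta> + Y)"
  obtain d where d: "d \<notin> consts_seq ?G ?D" using fresh_exists[OF inf] by blast
  have cB: "c \<notin> consts_fm B" using allR.hyps(1) by (simp add: consts_seq_def)
  have eB: "rn_fm (\<sigma>(c := d)) B = rn_fm \<sigma> B" using cB by (auto intro!: rn_fm_agree)
  have cGD: "c \<notin> consts_seq \<Gamma> \<Delta>" using allR.hyps(1) by (simp add: consts_seq_def)
  have "Cprov (image_mset (rn_fm (\<sigma>(c := d))) \<Gamma> + X)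
     (image_mset (rn_fm (\<sigma>(c := d))) (add_mset (inst B (Fn c [])) \<Delta>) + Y)" by (rule allR.IH)
  then have "Cprov ?G (add_mset (inst (rn_fm \<sigma> B) (Fn d [])) (image_mset (rn_fm \<sigma>) \<Delta> + Y))"
    by (simp add: rn_inst eB rn_image_agree[OF cGD])
  then show ?case using Cprov.allR[OF d] by simp
qed

lemma rn_id_tm: "rn_tm (\<lambda>a. a) t = t"
  by (induction t) (auto simp: map_idI)

lemma rn_id_fm: "rn_fm (\<lambda>a. a) A = A"
  by (induction A) (auto simp: map_idI rn_id_tm)

lemma weak:
  assumes "infinite (UNIV :: 'f set)" "Cprov (G :: ('f,'p) fm multiset) D"
  shows "Cprov (G + X) (D + Y)"
  using weak_rn[OF assms, of "\<lambda>a. a" X Y] by (simp add: rn_id_fm multiset.map_ident_strong)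

lemma contr_rep:
  "Cprov G (replicate_mset n A + replicate_mset n A + D) \<Longrightarrow> Cprov G (replicate_mset n A + D)"
proof (induction n arbitrary: D)
  case 0 then show ?case by simp
next
  case (Suc n)
  have "Cprov G (add_mset A (add_mset A (replicate_mset n A + replicate_mset n A + D)))"
    using Suc.prems by (simp add: ac_simps)
  then have "Cprov G (add_mset A (replicate_mset n A + replicate_mset n A + D))"
    by (rule Cprov.contrR)
  then have "Cprov G (replicate_mset n A + replicate_mset n A + add_mset A D)" by simp
  then have "Cprov G (replicate_mset n A + add_mset A D)" by (rule Suc.IH)
  then show ?case by simp
qed

lemma rep_pred: "0 < n \<Longrightarrow> replicate_mset n X = add_mset X (replicate_mset (n - 1) X)"
  by (cases n) auto

lemma decomp:
  assumes "add_mset X G = replicate_mset n N + \<Gamma>"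
  shows "(X = N \<and> n > 0 \<and> G = replicate_mset (n - 1) N + \<Gamma>) \<or>
         (\<exists>\<Gamma>0. \<Gamma> = add_mset X \<Gamma>0 \<and> G = replicate_mset n N + \<Gamma>0)"
proof (cases "X \<in># \<Gamma>")
  case True
  then obtain \<Gamma>0 where g: "\<Gamma> = add_mset X \<Gamma>0" by (meson mset_add)
  with assms have "G = replicate_mset n N + \<Gamma>0" by simp
  with g show ?thesis by blast
next
  case False
  have "X \<in># replicate_mset n N + \<Gamma>" using assms[symmetric] by simp
  with False have x: "X = N" and n: "n > 0" by (auto split: if_splits)
  have "replicate_mset n N = add_mset N (replicate_mset (n - 1) N)"
    using n by (rule rep_pred)
  with assms x n show ?thesis by simp
qed

lemma consts_rep: "n > 0 \<Longrightarrow> c \<notin> consts_fm (Imp F Bot) \<Longrightarrow> c \<notin> consts_fm F" by simp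

lemma inv:
  assumes inf: "infinite (UNIV :: 'f set)"
  shows "Cprov (G' :: ('f,'p) fm multiset) D \<Longrightarrow> G' = replicate_mset n (Imp F Bot) + \<Gamma> \<Longrightarrow>
    Cprov \<Gamma> (replicate_mset n F + D)"
proof (induction arbitrary: n \<Gamma> rule: Cprov.induct)
  case (ax G D)
  then show ?case unfolding is_axiom_def by (intro Cprov.ax) (auto simp: is_axiom_def)
next
  case (contrL B G D)
  from decomp[OF contrL.prems] show ?case
  proof
    assume h: "B = Imp F Bot \<and> 0 < n \<and> G = replicate_mset (n - 1) (Imp F Bot) + \<Gamma>"
    then have "add_mset B (add_mset B G) = replicate_mset (Suc n) (Imp F Bot) + \<Gamma>"
      by (simp add: rep_pred[of n])
    from contrL.IH[OF this] have "Cprov \<Gamma> (add_mset F (add_mset F (replicate_mset (n - 1) F + D)))"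
      using h by (simp add: rep_pred[of n])
    then have "Cprov \<Gamma> (add_mset F (replicate_mset (n - 1) F + D))" by (rule Cprov.contrR)
    then show ?thesis using h by (simp add: rep_pred[of n])
  next
    assume "\<exists>\<Gamma>0. \<Gamma> = add_mset B \<Gamma>0 \<and> G = replicate_mset n (Imp F Bot) + \<Gamma>0"
    then obtain \<Gamma>0 where h: "\<Gamma> = add_mset B \<Gamma>0" "G = replicate_mset n (Imp F Bot) + \<Gamma>0" by blast
    have "Cprov (add_mset B (add_mset B \<Gamma>0)) (replicate_mset n F + D)"
      by (rule contrL.IH) (simp add: h)
    then show ?thesis using h Cprov.contrL by blast
  qed
next
  case (contrR G B D)
  have "Cprov \<Gamma> (replicate_mset n F + add_mset B (add_mset B D))" by (rule contrR.IH) (rule contrR.prems)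
  then have "Cprov \<Gamma> (add_mset B (add_mset B (replicate_mset n F + D)))" by simp
  from Cprov.contrR[OF this] show ?case by simp
next
  case (botR G D B)
  have "Cprov \<Gamma> (replicate_mset n F + add_mset Bot D)" by (rule botR.IH) (rule botR.prems)
  then have "Cprov \<Gamma> (add_mset Bot (replicate_mset n F + D))" by simp
  from Cprov.botR[OF this] show ?case by simp
next
  case (conjL1 B G D C)
  from decomp[OF conjL1.prems] obtain \<Gamma>0 where h: "\<Gamma> = add_mset (Conj B C) \<Gamma>0" "G = replicate_mset n (Imp F Bot) + \<Gamma>0" by auto
  have "Cprov (add_mset B \<Gamma>0) (replicate_mset n F + D)" by (rule conjL1.IH) (simp add: h)
  then show ?case using h Cprov.conjL1 by blast
next
  case (conjL2 C G D B)
  from decomp[OF conjL2.prems] obtain \<Gamma>0 where h: "\<Gamma> = add_mset (Conj B C) \<Gamma>0" "G = replicate_mset n (Imp F Bot) + \<Gamma>0" by auto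
  have "Cprov (add_mset C \<Gamma>0) (replicate_mset n F + D)" by (rule conjL2.IH) (simp add: h)
  then show ?case using h Cprov.conjL2 by blast
next
  case (disjL B G D C)
  from decomp[OF disjL.prems] obtain \<Gamma>0 where h: "\<Gamma> = add_mset (Disj B C) \<Gamma>0" "G = replicate_mset n (Imp F Bot) + \<Gamma>0" by auto
  have "Cprov (add_mset B \<Gamma>0) (replicate_mset n F + D)" by (rule disjL.IH) (simp add: h)
  moreover have "Cprov (add_mset C \<Gamma>0) (replicate_mset n F + D)" by (rule disjL.IH) (simp add: h)
  ultimately show ?case using h Cprov.disjL by blast
next
  case (conjR G B D C)
  have "Cprov \<Gamma> (replicate_mset n F + add_mset B D)" by (rule conjR.IH) (rule conjR.prems)
  then have 1: "Cprov \<Gamma> (add_mset B (replicate_mset n F + D))" by simp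
  have "Cprov \<Gamma> (replicate_mset n F + add_mset C D)" by (rule conjR.IH) (rule conjR.prems)
  then have 2: "Cprov \<Gamma> (add_mset C (replicate_mset n F + D))" by simp
  from Cprov.conjR[OF 1 2] show ?case by simp
next
  case (disjR1 G B D C)
  have "Cprov \<Gamma> (replicate_mset n F + add_mset B D)" by (rule disjR1.IH) (rule disjR1.prems)
  then have "Cprov \<Gamma> (add_mset B (replicate_mset n F + D))" by simp
  from Cprov.disjR1[OF this] show ?case by simp
next
  case (disjR2 G C D B)
  have "Cprov \<Gamma> (replicate_mset n F + add_mset C D)" by (rule disjR2.IH) (rule disjR2.prems)
  then have "Cprov \<Gamma> (add_mset C (replicate_mset n F + D))" by simp
  from Cprov.disjR2[OF this] show ?case by simp
next
  case (impL G B D C \<Theta>)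
  from decomp[OF impL.prems] show ?case
  proof
    assume h: "Imp B C = Imp F Bot \<and> 0 < n \<and> G = replicate_mset (n - 1) (Imp F Bot) + \<Gamma>"
    have "Cprov \<Gamma> (replicate_mset (n - 1) F + add_mset B D)" by (rule impL.IH) (simp add: h)
    then have "Cprov \<Gamma> (replicate_mset n F + D)" using h
      by (simp add: rep_pred[of n])
    from weak[OF inf this, of "{#}" \<Theta>] show ?thesis by (simp add: ac_simps)
  next
    assume "\<exists>\<Gamma>0. \<Gamma> = add_mset (Imp B C) \<Gamma>0 \<and> G = replicate_mset n (Imp F Bot) + \<Gamma>0"
    then obtain \<Gamma>0 where h: "\<Gamma> = add_mset (Imp B C) \<Gamma>0" "G = replicate_mset n (Imp F Bot) + \<Gamma>0" by blast
    have 1: "Cprov \<Gamma>0 (add_mset B (replicate_mset n F + D))"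
      using impL.IH(1)[of n \<Gamma>0] h by simp
    have 2: "Cprov (add_mset C \<Gamma>0) (replicate_mset n F + \<Theta>)"
      using impL.IH(2)[of n "add_mset C \<Gamma>0"] h by simp
    have "Cprov \<Gamma> (replicate_mset n F + D + (replicate_mset n F + \<Theta>))"
      using Cprov.impL[OF 1 2] h by simp
    then have "Cprov \<Gamma> (replicate_mset n F + replicate_mset n F + (D + \<Theta>))" by (simp add: ac_simps)
    from contr_rep[OF this] show ?thesis by (simp add: ac_simps)
  qed
next
  case (impR B G C D)
  have "Cprov (add_mset B \<Gamma>) (replicate_mset n F + add_mset C D)" by (rule impR.IH) (simp add: impR.prems)
  then have "Cprov (add_mset B \<Gamma>) (add_mset C (replicate_mset n F + D))" by simp
  from Cprov.impR[OF this] show ?case by simp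
next
  case (allL B t G D)
  from decomp[OF allL.prems] obtain \<Gamma>0 where h: "\<Gamma> = add_mset (Forall B) \<Gamma>0" "G = replicate_mset n (Imp F Bot) + \<Gamma>0" by auto
  have "Cprov (add_mset (inst B t) \<Gamma>0) (replicate_mset n F + D)" by (rule allL.IH) (simp add: h)
  then show ?case using h Cprov.allL by blast
next
  case (exR G B t D)
  have "Cprov \<Gamma> (replicate_mset n F + add_mset (inst B t) D)" by (rule exR.IH) (rule exR.prems)
  then have "Cprov \<Gamma> (add_mset (inst B t) (replicate_mset n F + D))" by simp
  from Cprov.exR[OF this] show ?case by simp
next
  case (exL c B G D)
  from decomp[OF exL.prems] obtain \<Gamma>0 where h: "\<Gamma> = add_mset (Exists B) \<Gamma>0" "G = replicate_mset n (Imp F Bot) + \<Gamma>0" by auto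
  have "Cprov (add_mset (inst B (Fn c [])) \<Gamma>0) (replicate_mset n F + D)" by (rule exL.IH) (simp add: h)
  moreover have "c \<notin> consts_seq (add_mset (Exists B) \<Gamma>0) (replicate_mset n F + D)"
    using exL.hyps(1) h by (cases "n = 0") (auto simp: consts_seq_def)
  ultimately show ?case unfolding h(1) by (rule Cprov.exL[rotated])
next
  case (allR c G B D)
  have "Cprov \<Gamma> (replicate_mset n F + add_mset (inst B (Fn c [])) D)" by (rule allR.IH) (rule allR.prems)
  then have "Cprov \<Gamma> (add_mset (inst B (Fn c [])) (replicate_mset n F + D))" by simp
  moreover have "c \<notin> consts_seq \<Gamma> (add_mset (Forall B) (replicate_mset n F + D))"
    using allR.hyps(1) allR.prems by (cases "n = 0") (auto simp: consts_seq_def)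
  ultimately show ?case using Cprov.allR by simp
qed

theorem lemma3:
  fixes \<Gamma> :: "('f, 'p) fm multiset" and F :: "('f, 'p) fm"
  assumes "infinite (UNIV :: 'f set)"
  shows "Cprov (add_mset (Imp F Bot) \<Gamma>) {#F#} \<longleftrightarrow> Cprov \<Gamma> {#F#}"
proof
  assume a: "Cprov (add_mset (Imp F Bot) \<Gamma>) {#F#}"
  have "Cprov \<Gamma> (replicate_mset 1 F + {#F#})"
    by (rule inv[OF assms a]) simp
  then have "Cprov \<Gamma> (add_mset F (add_mset F {#}))" by simp
  then show "Cprov \<Gamma> {#F#}" by (rule Cprov.contrR)
next
  assume a: "Cprov \<Gamma> {#F#}"
  have "Cprov (add_mset Bot \<Gamma>) (add_mset Bot {#})"
    by (rule Cprov.ax) (simp add: is_axiom_def)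
  then have b: "Cprov (add_mset Bot \<Gamma>) {#F#}" by (rule Cprov.botR)
  have a': "Cprov \<Gamma> (add_mset F {#})" using a by simp
  from Cprov.impL[OF a' b] show "Cprov (add_mset (Imp F Bot) \<Gamma>) {#F#}" by simp
qed

end
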